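(* An element $r\in\widetilde{\mathbb{K}}_{sm}$ is non-invertible if and only if it is a zero divisor (i.e., there exists $s\in\widetilde{\mathbb{K}}_{sm}$, $s\neq0$, with $rs=0$).
   Context: Let $I=(0,1]$ and $\mathbb{K}\in\{\mathbb{R},\mathbb{C}\}$. $\mathcal{E}_{M,sm}$ is the set of nets $(r_\varepsilon)_{\varepsilon\in I}\in\mathbb{K}^I$ with $\varepsilon\mapsto r_\varepsilon$ smooth on $I$ and $|r_\varepsilon|=O(\varepsilon^{-N})$ as $\varepsilon\to0$ for some $N\in\mathbb{N}$; $\mathcal{N}_{sm}$ is the set of smooth nets with $|r_\varepsilon|=O(\varepsilon^m)$ for all $m\in\mathbb{N}$; $\widetilde{\mathbb{K}}_{sm}=\mathcal{E}_{M,sm}/\mathcal{N}_{sm}$, a commutative ring with componentwise operations. *)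

theory Defs
  imports "HOL-Analysis.Analysis"
begin

text \<open>Index set I = (0,1]. Nets are modelled as functions real => K; only values on I matter.\<close>

definition Iset :: "real set" where "Iset = {0<..1}"

text \<open>Smoothness (C-infinity) of a K-valued net on I: there is a sequence of successive
  derivatives (one-sided at the endpoint 1, i.e. derivatives within I).\<close>
definition smooth_net :: "(real \<Rightarrow> 'a::real_normed_vector) \<Rightarrow> bool" where
  "smooth_net r \<longleftrightarrow> (\<exists>D :: nat \<Rightarrow> real \<Rightarrow> 'a. D 0 = r \<and>
      (\<forall>n. \<forall>t\<in>Iset. (D n has_vector_derivative D (Suc n) t) (at t within Iset)))"

definition EM_sm :: "(real \<Rightarrow> 'a::real_normed_vector) set" where
  "EM_sm = {r. smooth_net r \<and> (\<exists>N::nat. \<exists>C e0. e0 > 0 \<and>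
      (\<forall>e. 0 < e \<and> e \<le> e0 \<longrightarrow> norm (r e) \<le> C * (1 / e) ^ N))}"

definition N_sm :: "(real \<Rightarrow> 'a::real_normed_vector) set" where
  "N_sm = {r. smooth_net r \<and> (\<forall>m::nat. \<exists>C e0. e0 > 0 \<and>
      (\<forall>e. 0 < e \<and> e \<le> e0 \<longrightarrow> norm (r e) \<le> C * e ^ m))}"

text \<open>For a representative r of an element of K~_sm = E_{M,sm}/N_{sm}:
  invertibility (exists s with r s = 1 in the quotient) and being a zero divisor
  (exists s, s <> 0 in the quotient, with r s = 0 in the quotient).\<close>
definition invertible_sm :: "(real \<Rightarrow> 'a::real_normed_field) \<Rightarrow> bool" where
  "invertible_sm r \<longleftrightarrow> (\<exists>s\<in>EM_sm. (\<lambda>e. r e * s e - 1) \<in> N_sm)"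

definition zero_divisor_sm :: "(real \<Rightarrow> 'a::real_normed_field) \<Rightarrow> bool" where
  "zero_divisor_sm r \<longleftrightarrow> (\<exists>s\<in>EM_sm. s \<notin> N_sm \<and> (\<lambda>e. r e * s e) \<in> N_sm)"

end

theory Submission
  imports Defs
begin


definition dv :: "real set \<Rightarrow> (real \<Rightarrow> 'a::real_normed_vector) \<Rightarrow> real \<Rightarrow> 'a" where
  "dv S f t = vector_derivative f (at t within S)"

fun Cn :: "real set \<Rightarrow> nat \<Rightarrow> (real \<Rightarrow> 'a::real_normed_vector) \<Rightarrow> bool" where
  "Cn S 0 f = True"
| "Cn S (Suc n) f = ((\<forall>t\<in>S. f differentiable (at t within S)) \<and> Cn S n (dv S f))"

definition nb :: "real set \<Rightarrow> bool" where "nb S \<longleftrightarrow> (\<forall>t\<in>S. at t within S \<noteq> bot)"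

definition sm :: "real set \<Rightarrow> (real \<Rightarrow> 'a::real_normed_vector) \<Rightarrow> bool" where
  "sm S f \<longleftrightarrow> (\<forall>n. Cn S n f)"

lemma dv_cong: "(\<And>t. t\<in>S \<Longrightarrow> f t = g t) \<Longrightarrow> t \<in> S \<Longrightarrow> dv S f t = dv S g t"
  unfolding dv_def by (rule vector_derivative_cong_eq) (auto intro: always_eventually)

lemma Cn_cong: "(\<And>t. t\<in>S \<Longrightarrow> f t = g t) \<Longrightarrow> Cn S n f = Cn S n g"
proof (induction n arbitrary: f g)
  case 0 then show ?case by simp
next
  case (Suc n)
  have d: "(\<forall>t\<in>S. f differentiable (at t within S)) = (\<forall>t\<in>S. g differentiable (at t within S))"
  proof -
    have "f differentiable (at t within S) \<Longrightarrow> t \<in> S \<Longrightarrow> g differentiable (at t within S)"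
      if "\<And>t. t\<in>S \<Longrightarrow> f t = g t" for f g :: "real \<Rightarrow> 'a" and t
      using that by (metis differentiableI_vector has_vector_derivative_transform vector_derivative_works)
    then show ?thesis using Suc.prems by metis
  qed
  have "Cn S n (dv S f) = Cn S n (dv S g)"
    by (rule Suc.IH) (rule dv_cong[OF Suc.prems])
  then show ?case using d by simp
qed

lemma Cn_Suc_le: "Cn S (Suc n) f \<Longrightarrow> Cn S n f"
proof (induction n arbitrary: f)
  case 0 then show ?case by simp
next
  case (Suc n) then show ?case by simp
qed

lemma Cn_le: "m \<le> n \<Longrightarrow> Cn S n f \<Longrightarrow> Cn S m f"
  by (induction n rule: dec_induct) (use Cn_Suc_le in blast)+

lemma sm_dv: "sm S f \<Longrightarrow> sm S (dv S f)"
  unfolding sm_def by (metis Cn.simps(2))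

lemma Cn_hasd: "Cn S (Suc n) f \<Longrightarrow> t \<in> S \<Longrightarrow> (f has_vector_derivative dv S f t) (at t within S)"
  by (simp add: dv_def vector_derivative_works)

lemma sm_hasd: "sm S f \<Longrightarrow> t \<in> S \<Longrightarrow> (f has_vector_derivative dv S f t) (at t within S)"
  unfolding sm_def by (metis Cn_hasd)

lemma dv_eq: "nb S \<Longrightarrow> t \<in> S \<Longrightarrow> (f has_vector_derivative D) (at t within S) \<Longrightarrow> dv S f t = D"
  unfolding dv_def nb_def by (simp add: vector_derivative_within)

lemma Cn_const: "nb S \<Longrightarrow> Cn S n (\<lambda>t. c)"
proof (induction n arbitrary: c)
  case 0 then show ?case by simp
next
  case (Suc n)
  have "Cn S n (dv S (\<lambda>t. c))"
    using Suc by (subst Cn_cong[where g="\<lambda>t. 0"]) (auto intro: dv_eq)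
  then show ?case by (auto intro: differentiableI_vector)
qed

lemma Cn_add:
  fixes f g :: "real \<Rightarrow> 'a::real_normed_vector"
  shows "nb S \<Longrightarrow> Cn S n f \<Longrightarrow> Cn S n g \<Longrightarrow> Cn S n (\<lambda>t. f t + g t)"
proof (induction n arbitrary: f g)
  case 0 then show ?case by simp
next
  case (Suc n)
  have h: "t \<in> S \<Longrightarrow> ((\<lambda>t. f t + g t) has_vector_derivative dv S f t + dv S g t) (at t within S)" for t
    using Suc.prems by (intro has_vector_derivative_add Cn_hasd) auto
  have "Cn S n (dv S (\<lambda>t. f t + g t))"
    using Suc by (subst Cn_cong[where g="\<lambda>t. dv S f t + dv S g t"]) (auto intro: dv_eq h)
  then show ?case using h by (auto intro: differentiableI_vector)
qed

lemma Cn_lin: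
  fixes f :: "real \<Rightarrow> 'a::real_normed_vector" and L :: "'a \<Rightarrow> 'b::real_normed_vector"
  shows "nb S \<Longrightarrow> bounded_linear L \<Longrightarrow> Cn S n f \<Longrightarrow> Cn S n (\<lambda>t. L (f t))"
proof (induction n arbitrary: f)
  case 0 then show ?case by simp
next
  case (Suc n)
  have h: "t \<in> S \<Longrightarrow> ((\<lambda>t. L (f t)) has_vector_derivative L (dv S f t)) (at t within S)" for t
    using Suc.prems bounded_linear.has_vector_derivative[OF Suc.prems(2) Cn_hasd[of S n f t]] by simp
  have "Cn S n (dv S (\<lambda>t. L (f t)))"
    using Suc by (subst Cn_cong[where g="\<lambda>t. L (dv S f t)"]) (auto intro: dv_eq h)
  then show ?case using h by (auto intro: differentiableI_vector)
qed

lemma Cn_mult: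
  fixes f g :: "real \<Rightarrow> 'a::real_normed_algebra"
  shows "nb S \<Longrightarrow> Cn S n f \<Longrightarrow> Cn S n g \<Longrightarrow> Cn S n (\<lambda>t. f t * g t)"
proof (induction n arbitrary: f g)
  case 0 then show ?case by simp
next
  case (Suc n)
  have h: "t \<in> S \<Longrightarrow> ((\<lambda>t. f t * g t) has_vector_derivative f t * dv S g t + dv S f t * g t) (at t within S)" for t
    using Suc.prems by (intro has_vector_derivative_mult Cn_hasd) auto
  have "Cn S n (\<lambda>t. f t * dv S g t)" "Cn S n (\<lambda>t. dv S f t * g t)"
    using Suc.prems Cn_Suc_le[of S n f] Cn_Suc_le[of S n g] by (auto intro!: Suc.IH)
  then have "Cn S n (\<lambda>t. f t * dv S g t + dv S f t * g t)"
    using Suc.prems by (intro Cn_add)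
  then have "Cn S n (dv S (\<lambda>t. f t * g t))"
    using Suc by (subst Cn_cong[where g="\<lambda>t. f t * dv S g t + dv S f t * g t"]) (auto intro: dv_eq h)
  then show ?case using h by (auto intro: differentiableI_vector)
qed




lemma nb_UNIV: "nb UNIV" by (simp add: nb_def)

lemma nb_Iset: "nb Iset"
  unfolding nb_def Iset_def
proof (intro ballI)
  fix t :: real assume t: "t \<in> {0<..1}"
  show "at t within {0<..1} \<noteq> bot"
    unfolding not_trivial_limit_within_ball
  proof (intro allI impI)
    fix e :: real assume e: "e > 0"
    let ?x = "max (t/2) (t - e/2)"
    have "?x \<in> {0<..1} \<inter> ball t e - {t}" using t e by (auto simp: dist_real_def)
    then show "{0<..1} \<inter> ball t e - {t} \<noteq> {}" by blast
  qed
qed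

lemma Cn_id: "nb S \<Longrightarrow> Cn S n (\<lambda>t::real. t)"
proof (cases n)
  case 0 then show ?thesis by simp
next
  case (Suc m)
  assume nb: "nb S"
  have "Cn S m (dv S (\<lambda>t::real. t))"
    using nb by (subst Cn_cong[where g="\<lambda>t. 1"]) (auto intro: dv_eq has_vector_derivative_id Cn_const)
  then show ?thesis using Suc by (auto intro: differentiableI_vector has_vector_derivative_id)
qed

lemma Cn_comp:
  fixes F g :: "real \<Rightarrow> real"
  shows "nb S \<Longrightarrow> sm UNIV F \<Longrightarrow> sm S g \<Longrightarrow> Cn S n (\<lambda>t. F (g t))"
proof (induction n arbitrary: F)
  case 0 then show ?case by simp
next
  case (Suc n)
  have h: "((\<lambda>t. F (g t)) has_vector_derivative dv S g t * dv UNIV F (g t)) (at t within S)"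
    if t: "t \<in> S" for t
  proof -
    have "(F has_vector_derivative dv UNIV F (g t)) (at (g t))"
      using sm_hasd[OF Suc.prems(2), of "g t"] by simp
    then have "(F has_field_derivative dv UNIV F (g t)) (at (g t))"
      by (simp add: has_real_derivative_iff_has_vector_derivative)
    then have "(F has_field_derivative dv UNIV F (g t)) (at (g t) within g ` S)"
      by (rule has_field_derivative_at_within)
    from field_vector_diff_chain_within[OF sm_hasd[OF Suc.prems(3) t] this]
    show ?thesis by (simp add: o_def)
  qed
  have "Cn S n (\<lambda>t. dv S g t * dv UNIV F (g t))"
    using Suc.prems sm_dv[OF Suc.prems(2)] sm_dv[OF Suc.prems(3)] by (intro Cn_mult Suc.IH) (auto simp: sm_def)
  then have "Cn S n (dv S (\<lambda>t. F (g t)))"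
    using Suc by (subst Cn_cong[where g="\<lambda>t. dv S g t * dv UNIV F (g t)"]) (auto intro: dv_eq h)
  then show ?case using h by (auto intro: differentiableI_vector)
qed

lemma sm_comp:
  fixes F g :: "real \<Rightarrow> real"
  shows "nb S \<Longrightarrow> sm UNIV F \<Longrightarrow> sm S g \<Longrightarrow> sm S (\<lambda>t. F (g t))"
  using Cn_comp sm_def by blast

lemma Cn_inv:
  fixes h :: "real \<Rightarrow> 'a::real_normed_field"
  assumes nb: "nb S" and hs: "sm S h" and hz: "\<And>t. t \<in> S \<Longrightarrow> h t \<noteq> 0"
  shows "Cn S n (\<lambda>t. inverse (h t))"
proof (induction n)
  case 0 then show ?case by simp
next
  case (Suc n)
  have d: "((\<lambda>t. inverse (h t)) has_vector_derivative dv S h t * (- (inverse (h t) ^ Suc (Suc 0)))) (at t within S)"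
    if t: "t \<in> S" for t
    using field_vector_diff_chain_within[OF sm_hasd[OF hs t] DERIV_inverse[OF hz[OF t]]]
    by (simp add: o_def)
  have "Cn S n (\<lambda>t. dv S h t * ((- 1) * (inverse (h t) * inverse (h t))))"
    using Suc.IH nb sm_dv[OF hs] by (intro Cn_mult Cn_const) (auto simp: sm_def)
  then have "Cn S n (dv S (\<lambda>t. inverse (h t)))"
    using nb by (subst Cn_cong[where g="\<lambda>t. dv S h t * ((- 1) * (inverse (h t) * inverse (h t)))"])
       (auto intro!: dv_eq simp: d[simplified])
  then show ?case using d by (auto intro: differentiableI_vector)
qed

lemma smooth_net_sm: "smooth_net r \<Longrightarrow> sm Iset r"
proof -
  assume "smooth_net r"
  then obtain D where D0: "D 0 = r" and DD: "\<And>n t. t \<in> Iset \<Longrightarrow> (D n has_vector_derivative D (Suc n) t) (at t within Iset)"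
    unfolding smooth_net_def by blast
  have "Cn Iset n (D k)" for n k
  proof (induction n arbitrary: k)
    case 0 then show ?case by simp
  next
    case (Suc n)
    have "Cn Iset n (dv Iset (D k))"
      by (subst Cn_cong[where g="D (Suc k)"]) (auto intro: dv_eq nb_Iset DD Suc.IH)
    then show ?case using DD by (auto intro: differentiableI_vector)
  qed
  then show ?thesis using D0 sm_def by blast
qed

lemma sm_smooth_net: "sm Iset r \<Longrightarrow> smooth_net r"
proof -
  assume r: "sm Iset r"
  define D where "D n = (dv Iset ^^ n) r" for n
  have "sm Iset (D n)" for n
    by (induction n) (auto simp: D_def r intro: sm_dv)
  then show ?thesis unfolding smooth_net_def
    by (intro exI[of _ D]) (auto simp: D_def intro: sm_hasd)
qed

lemma transform_open:
  assumes "open V" "x \<in> V" "x \<in> S" "\<And>y. y \<in> S \<Longrightarrow> y \<in> V \<Longrightarrow> f y = g y"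
    "(g has_vector_derivative D) (at x within S)"
  shows "(f has_vector_derivative D) (at x within S)"
proof -
  obtain d where d: "d > 0" "ball x d \<subseteq> V" using assms(1,2) openE by blast
  show ?thesis
    by (rule has_vector_derivative_transform_within[OF assms(5) d(1) assms(3)])
       (use d assms(4) in \<open>metis mem_ball dist_commute subsetD\<close>)
qed

lemma Cn_local:
  assumes "nb S" "\<And>t. t \<in> S \<Longrightarrow> \<exists>V g. open V \<and> t \<in> V \<and> Cn S n g \<and> (\<forall>x\<in>S\<inter>V. f x = g x)"
  shows "Cn S n f"
  using assms(2)
proof (induction n arbitrary: f)
  case 0 then show ?case by simp
next
  case (Suc n)
  have key: "\<exists>V g. open V \<and> t \<in> V \<and> Cn S n (dv S g) \<and> (\<forall>x\<in>S\<inter>V. (f has_vector_derivative dv S g x) (at x within S))"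
    if t: "t \<in> S" for t
  proof -
    obtain V g where V: "open V" "t \<in> V" "Cn S (Suc n) g" "\<forall>x\<in>S\<inter>V. f x = g x"
      using Suc.prems t by blast
    have "(f has_vector_derivative dv S g x) (at x within S)" if "x \<in> S \<inter> V" for x
      using that V by (intro transform_open[of V x S f g]) (auto intro: Cn_hasd)
    then show ?thesis using V by auto
  qed
  have diff: "f differentiable at t within S" if "t \<in> S" for t
    using key[OF that] that by (auto intro: differentiableI_vector)
  have "Cn S n (dv S f)"
  proof (rule Suc.IH)
    fix t assume t: "t \<in> S"
    obtain V g where V: "open V" "t \<in> V" "Cn S n (dv S g)" "\<forall>x\<in>S\<inter>V. (f has_vector_derivative dv S g x) (at x within S)"
      using key[OF t] by blast
    show "\<exists>V g. open V \<and> t \<in> V \<and> Cn S n g \<and> (\<forall>x\<in>S\<inter>V. dv S f x = g x)"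
      using V assms(1) by (intro exI[of _ V] exI[of _ "dv S g"]) (auto intro: dv_eq)
  qed
  then show ?case using diff by simp
qed




inductive PP :: "(real \<Rightarrow> real) \<Rightarrow> bool" where
  PPc: "PP (\<lambda>x. c)"
| PPid: "PP (\<lambda>x. x)"
| PPadd: "PP f \<Longrightarrow> PP g \<Longrightarrow> PP (\<lambda>x. f x + g x)"
| PPmul: "PP f \<Longrightarrow> PP g \<Longrightarrow> PP (\<lambda>x. f x * g x)"

lemma PP_deriv: "PP f \<Longrightarrow> \<exists>f'. PP f' \<and> (\<forall>x. (f has_real_derivative f' x) (at x))"
proof (induction rule: PP.induct)
  case (PPc c) then show ?case by (intro exI[of _ "\<lambda>x. 0"]) (auto intro: PP.intros)
next
  case PPid then show ?case by (intro exI[of _ "\<lambda>x. 1"]) (auto intro: PP.intros)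
next
  case (PPadd f g)
  then obtain f' g' where "PP f'" "\<And>x. (f has_real_derivative f' x) (at x)" "PP g'" "\<And>x. (g has_real_derivative g' x) (at x)"
    by blast
  then show ?case by (intro exI[of _ "\<lambda>x. f' x + g' x"]) (auto intro: PP.intros DERIV_add)
next
  case (PPmul f g)
  then obtain f' g' where A: "PP f'" "\<And>x. (f has_real_derivative f' x) (at x)" "PP g'" "\<And>x. (g has_real_derivative g' x) (at x)"
    by blast
  show ?case using PPmul.hyps A
    by (intro exI[of _ "\<lambda>x. f' x * g x + g' x * f x"]) (auto intro: PP.intros DERIV_mult)
qed

lemma PP_bound: "PP f \<Longrightarrow> \<exists>C N. C \<ge> 0 \<and> (\<forall>x\<ge>1. \<bar>f x\<bar> \<le> C * x ^ N)"
proof (induction rule: PP.induct)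
  case (PPc c) then show ?case by (intro exI[of _ "\<bar>c\<bar>"] exI[of _ 0]) auto
next
  case PPid then show ?case by (intro exI[of _ 1] exI[of _ 1]) auto
next
  case (PPadd f g)
  then obtain C1 N1 C2 N2 where A: "C1 \<ge> 0" "\<And>x. x \<ge> 1 \<Longrightarrow> \<bar>f x\<bar> \<le> C1 * x ^ N1"
    "C2 \<ge> 0" "\<And>x. x \<ge> 1 \<Longrightarrow> \<bar>g x\<bar> \<le> C2 * x ^ N2" by blast
  have "\<bar>f x + g x\<bar> \<le> (C1 + C2) * x ^ (max N1 N2)" if x: "x \<ge> 1" for x
  proof -
    have "x ^ N1 \<le> x ^ max N1 N2" "x ^ N2 \<le> x ^ max N1 N2" using x by (simp_all add: power_increasing)
    then have "C1 * x ^ N1 \<le> C1 * x ^ max N1 N2" "C2 * x ^ N2 \<le> C2 * x ^ max N1 N2"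
      using A by (auto intro: mult_left_mono)
    moreover have "\<bar>f x + g x\<bar> \<le> \<bar>f x\<bar> + \<bar>g x\<bar>" by (rule abs_triangle_ineq)
    ultimately show ?thesis using A(2,4)[OF x] by (simp add: distrib_right)
  qed
  then show ?case using A by (intro exI[of _ "C1 + C2"] exI[of _ "max N1 N2"]) auto
next
  case (PPmul f g)
  then obtain C1 N1 C2 N2 where A: "C1 \<ge> 0" "\<And>x. x \<ge> 1 \<Longrightarrow> \<bar>f x\<bar> \<le> C1 * x ^ N1"
    "C2 \<ge> 0" "\<And>x. x \<ge> 1 \<Longrightarrow> \<bar>g x\<bar> \<le> C2 * x ^ N2" by blast
  have "\<bar>f x * g x\<bar> \<le> (C1 * C2) * x ^ (N1 + N2)" if x: "x \<ge> 1" for x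
  proof -
    have "\<bar>f x * g x\<bar> \<le> (C1 * x ^ N1) * (C2 * x ^ N2)"
      unfolding abs_mult using A(2,4)[OF x] by (intro mult_mono) auto
    then show ?thesis by (simp add: power_add algebra_simps)
  qed
  then show ?case using A by (intro exI[of _ "C1 * C2"] exI[of _ "N1 + N2"]) auto
qed

lemma PP_lim: "PP g \<Longrightarrow> ((\<lambda>x::real. g x * exp (- x)) \<longlongrightarrow> 0) at_top"
proof -
  assume "PP g"
  then obtain C N where C: "C \<ge> 0" "\<And>x. x \<ge> 1 \<Longrightarrow> \<bar>g x\<bar> \<le> C * x ^ N"
    using PP_bound by blast
  have ev: "\<forall>\<^sub>F x in at_top. norm (g x * exp (- x)) \<le> C * (x ^ N / exp x)"
    using eventually_ge_at_top[of "1::real"]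
  proof eventually_elim
    case (elim x)
    have "norm (g x * exp (- x)) = \<bar>g x\<bar> * exp (- x)" by (simp add: abs_mult)
    also have "\<dots> \<le> C * x ^ N * exp (- x)" using C(2)[OF elim] by (intro mult_right_mono) auto
    also have "\<dots> = C * (x ^ N / exp x)" by (simp add: exp_minus divide_inverse)
    finally show ?case .
  qed
  have lim: "((\<lambda>x::real. C * (x ^ N / exp x)) \<longlongrightarrow> 0) at_top"
    by (rule tendsto_mult_right_zero[OF tendsto_power_div_exp_0])
  show ?thesis by (rule Lim_null_comparison[OF ev lim])
qed

definition Ep :: "(real \<Rightarrow> real) \<Rightarrow> real \<Rightarrow> real" where
  "Ep p t = (if t > 0 then p (inverse t) * exp (- inverse t) else 0)"

lemma Ep_deriv:
  assumes "PP p"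
  shows "\<exists>q. PP q \<and> (\<forall>t. (Ep p has_real_derivative Ep q t) (at t))"
proof -
  obtain p' where p': "PP p'" "\<And>x. (p has_real_derivative p' x) (at x)" using PP_deriv[OF assms] by blast
  define q where "q x = x * x * (p x + (-1) * p' x)" for x
  have qP: "PP q" unfolding q_def[abs_def] using assms p'(1) by (intro PP.intros)
  have "(Ep p has_real_derivative Ep q t) (at t)" for t
  proof (cases "t > 0")
    case True
    have t0: "t \<noteq> 0" using True by simp
    note d1 = DERIV_chain2[OF p'(2) DERIV_inverse[OF t0]]
    note d2 = DERIV_chain2[OF DERIV_exp DERIV_minus[OF DERIV_inverse[OF t0]]]
    have d: "((\<lambda>t. p (inverse t) * exp (- inverse t)) has_real_derivative Ep q t) (at t)"
      by (rule DERIV_cong[OF DERIV_mult[OF d1 d2]]) (use True in \<open>simp add: Ep_def q_def algebra_simps power2_eq_square\<close>)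
    show ?thesis
      by (rule has_field_derivative_transform_within_open[OF d, of "{0<..}"]) (use True in \<open>auto simp: Ep_def\<close>)
  next
    case False
    show ?thesis
    proof (cases "t < 0")
      case True
      have d: "((\<lambda>t. 0) has_real_derivative 0) (at t)" by simp
      have z: "Ep q t = 0" using False by (simp add: Ep_def)
      show ?thesis unfolding z
        by (rule has_field_derivative_transform_within_open[OF d, of "{..<0}"]) (use True in \<open>auto simp: Ep_def\<close>)
    next
      case False2: False
      then have t0: "t = 0" using False by simp
      have xp: "PP (\<lambda>x. x * p x)" using assms by (intro PP.intros)
      have lr: "((\<lambda>y. (Ep p y - Ep p 0) / (y - 0)) \<longlongrightarrow> 0) (at_right 0)"
      proof -
        have "((\<lambda>y. inverse y * p (inverse y) * exp (- inverse y)) \<longlongrightarrow> 0) (at_right (0::real))"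
          using filterlim_compose[OF PP_lim[OF xp] filterlim_inverse_at_top_right] .
        moreover have "\<forall>\<^sub>F y in at_right 0. inverse y * p (inverse y) * exp (- inverse y) = (Ep p y - Ep p 0) / (y - 0)"
          by (auto simp: eventually_at_right_less Ep_def field_simps eventually_at_right_field intro!: exI[of _ 1])
        ultimately show ?thesis by (rule Lim_transform_eventually)
      qed
      have ll: "((\<lambda>y. (Ep p y - Ep p 0) / (y - 0)) \<longlongrightarrow> 0) (at_left 0)"
      proof -
        have "\<forall>\<^sub>F y in at_left 0. 0 = (Ep p y - Ep p 0) / (y - (0::real))"
          by (auto simp: Ep_def eventually_at_left_field intro!: exI[of _ "-1"])
        then show ?thesis by (rule Lim_transform_eventually[rotated]) (rule tendsto_const)
      qed
      have "(Ep p has_real_derivative 0) (at 0)"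
        unfolding has_field_derivative_iff using filterlim_split_at[OF ll lr] by simp
      then show ?thesis using t0 by (simp add: Ep_def)
    qed
  qed
  then show ?thesis using qP by blast
qed

lemma Ep_Cn: "PP p \<Longrightarrow> Cn UNIV n (Ep p)"
proof (induction n arbitrary: p)
  case 0 then show ?case by simp
next
  case (Suc n)
  obtain q where q: "PP q" "\<And>t. (Ep p has_real_derivative Ep q t) (at t)" using Ep_deriv[OF Suc.prems] by blast
  have d: "(Ep p has_vector_derivative Ep q t) (at t within UNIV)" for t
    using q(2) by (simp add: has_real_derivative_iff_has_vector_derivative)
  have "Cn UNIV n (dv UNIV (Ep p))"
    by (subst Cn_cong[where g="Ep q"]) (auto intro: dv_eq nb_UNIV d Suc.IH q(1))
  then show ?case using d by (auto intro: differentiableI_vector)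
qed

definition Bump :: "real \<Rightarrow> real" where
  "Bump y = Ep (\<lambda>x. 1) (1 - y) * Ep (\<lambda>x. 1) (1 + y)"

lemma Bump_sm: "sm UNIV Bump"
proof -
  have a: "sm UNIV (\<lambda>y::real. 1 + (-1) * y)" "sm UNIV (\<lambda>y::real. 1 + y)"
    unfolding sm_def by (intro allI Cn_add Cn_mult Cn_const Cn_id nb_UNIV)+
  have e: "sm UNIV (Ep (\<lambda>x. 1))" using Ep_Cn[OF PPc] sm_def by blast
  have "sm UNIV (\<lambda>y. Ep (\<lambda>x. 1) (1 + (-1) * y) * Ep (\<lambda>x. 1) (1 + y))"
    using sm_comp[OF nb_UNIV e a(1)] sm_comp[OF nb_UNIV e a(2)]
    by (auto simp: sm_def intro!: Cn_mult nb_UNIV)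
  moreover have "(\<lambda>y. Ep (\<lambda>x. 1) (1 + (-1) * y) * Ep (\<lambda>x. 1) (1 + y)) = Bump"
    by (auto simp: Bump_def)
  ultimately show ?thesis by simp
qed

lemma Bump_zero: "\<bar>y\<bar> \<ge> 1 \<Longrightarrow> Bump y = 0"
  by (auto simp: Bump_def Ep_def)

lemma Bump_bounds: "0 \<le> Bump y" "Bump y \<le> 1"
  by (auto simp: Bump_def Ep_def mult_le_one)

lemma Bump_0: "Bump 0 = exp (-2)"
  by (simp add: Bump_def Ep_def flip: exp_add)




lemma exp_bound:
  fixes e :: real assumes e: "e > 0"
  shows "exp (- (1/e)) \<le> (real k + 1)^(k+1) * e^(k+1)"
proof -
  define n where "n = k + 1"
  have n: "n > 0" by (simp add: n_def)
  have "(1/(e * real n))^n \<le> (1 + (1/e)/real n)^n"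
    using e n by (intro power_mono) (auto simp: field_simps)
  also have "\<dots> \<le> exp (1/e)"
    using e n by (intro exp_ge_one_plus_x_over_n_power_n) (auto intro: order_trans[of _ 0])
  finally have h: "(1/(e * real n))^n \<le> exp (1/e)" .
  have pos: "0 < (1/(e * real n))^n" using e n by simp
  have "exp (- (1/e)) = 1 / exp (1/e)" by (simp add: exp_minus divide_inverse)
  also have "\<dots> \<le> 1 / (1/(e * real n))^n"
    using h pos by (intro divide_left_mono) auto
  also have "\<dots> = (real n)^n * e^n" by (simp add: power_divide power_mult_distrib field_simps)
  finally show ?thesis by (simp add: n_def add.commute)
qed

lemma sm_Ep1_Iset: "sm Iset (\<lambda>t. Ep (\<lambda>x. 1) t)"
proof -
  have "sm Iset (\<lambda>t::real. t)" unfolding sm_def by (intro allI Cn_id nb_Iset)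
  from sm_comp[OF nb_Iset _ this, of "Ep (\<lambda>x. 1)"] show ?thesis
    using Ep_Cn[OF PPc] sm_def by blast
qed

lemma Ep1_pos: "t > 0 \<Longrightarrow> Ep (\<lambda>x. 1) t = exp (- (1/t))"
  by (simp add: Ep_def divide_inverse)

lemma invertible_construct:
  fixes r :: "real \<Rightarrow> 'a::real_normed_field" and cj :: "'a \<Rightarrow> 'a"
  assumes cjl: "bounded_linear cj" and cjm: "\<And>x. cj x * x = of_real ((norm x)^2)"
    and cjn: "\<And>x. norm (cj x) = norm x"
    and r: "r \<in> EM_sm" and e0: "e0 > 0" and lb: "\<And>e. 0 < e \<Longrightarrow> e \<le> e0 \<Longrightarrow> e ^ m \<le> norm (r e)"
  shows "invertible_sm r"
proof -
  define psi where "psi t = Ep (\<lambda>x. 1) t" for t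
  define D where "D t = (norm (r t))^2 + psi t" for t
  define s where "s t = cj (r t) * inverse (cj (r t) * r t + of_real (psi t))" for t
  have rs: "sm Iset r" using r by (auto simp: EM_sm_def intro: smooth_net_sm)
  have psis: "sm Iset psi" using sm_Ep1_Iset by (simp add: psi_def[abs_def])
  have psipos: "t > 0 \<Longrightarrow> psi t > 0" for t by (simp add: psi_def Ep1_pos)
  have den: "cj (r t) * r t + of_real (psi t) = of_real (D t)" for t
    by (simp add: cjm D_def)
  have Dpos: "t > 0 \<Longrightarrow> D t > 0" for t
    using psipos[of t] by (simp add: D_def add_nonneg_pos)
  have cjs: "sm Iset (\<lambda>t. cj (r t))" using rs cjl nb_Iset by (auto simp: sm_def intro: Cn_lin)
  have ops: "sm Iset (\<lambda>t. (of_real (psi t) :: 'a))"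
    using psis nb_Iset by (auto simp: sm_def intro: Cn_lin bounded_linear_of_real)
  have dens: "sm Iset (\<lambda>t. cj (r t) * r t + of_real (psi t))"
    unfolding sm_def
  proof
    fix n
    have "Cn Iset n (\<lambda>t. cj (r t))" "Cn Iset n r" "Cn Iset n (\<lambda>t. (of_real (psi t) :: 'a))"
      using cjs rs ops unfolding sm_def by blast+
    then show "Cn Iset n (\<lambda>t. cj (r t) * r t + of_real (psi t))"
      using nb_Iset by (intro Cn_add Cn_mult)
  qed
  have ss: "sm Iset s"
    unfolding s_def sm_def
  proof
    fix n
    show "Cn Iset n (\<lambda>t. cj (r t) * inverse (cj (r t) * r t + of_real (psi t)))"
    proof (intro Cn_mult Cn_inv nb_Iset dens)
      show "Cn Iset n (\<lambda>t. cj (r t))" using cjs by (simp add: sm_def)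
      fix t assume "t \<in> Iset"
      then have "D t > 0" using Dpos by (simp add: Iset_def)
      then show "cj (r t) * r t + of_real (psi t) \<noteq> 0" by (simp add: den)
    qed
  qed
  have rss: "sm Iset (\<lambda>t. r t * s t + (- 1))"
    unfolding sm_def
  proof
    fix n
    have "Cn Iset n r" "Cn Iset n s" using rs ss unfolding sm_def by blast+
    then show "Cn Iset n (\<lambda>t. r t * s t + (- 1))" by (intro Cn_add Cn_mult Cn_const nb_Iset)
  qed
  have pt: "norm (s e) \<le> (1/e)^m \<and> norm (r e * s e - 1) \<le> psi e / (e^m)^2"
    if e: "0 < e" "e \<le> e0" for e
  proof -
    define nr where "nr = norm (r e)"
    have nr: "e^m \<le> nr" using lb[OF e] by (simp add: nr_def)
    have em: "e^m > 0" using e by simp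
    have nrp: "nr > 0" using nr em by linarith
    have Dp: "D e > 0" using Dpos e by simp
    have Dge: "nr^2 \<le> D e" using psipos[OF e(1)] by (simp add: D_def nr_def)
    have se: "s e = cj (r e) * inverse (of_real (D e))" by (simp add: s_def den)
    have n1: "norm (s e) = nr / D e"
      using Dp by (simp add: se norm_mult norm_inverse cjn nr_def divide_inverse)
    have "r e * s e = of_real (nr^2) * inverse (of_real (D e))"
      by (simp add: se mult.assoc[symmetric] mult.commute[of "r e"] cjm nr_def)
    also have "\<dots> = of_real (nr^2 / D e)" by (simp add: divide_inverse)
    finally have "r e * s e - 1 = of_real (nr^2 / D e - 1)" by simp
    also have "nr^2 / D e - 1 = - (psi e / D e)" using Dp by (simp add: D_def nr_def field_simps)
    finally have n2: "norm (r e * s e - 1) = psi e / D e"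
      using psipos[OF e(1)] Dp by (simp add: norm_divide del: of_real_divide)
    have "nr / D e \<le> nr / nr^2" using Dge nrp Dp by (intro divide_left_mono) auto
    also have "\<dots> = 1 / nr" by (simp add: power2_eq_square)
    also have "\<dots> \<le> 1 / e^m" using nr em by (intro divide_left_mono) auto
    also have "\<dots> = (1/e)^m" by (simp add: power_divide)
    finally have b1: "norm (s e) \<le> (1/e)^m" using n1 by simp
    have "psi e / D e \<le> psi e / nr^2" using Dge nrp Dp psipos[OF e(1)] by (intro divide_left_mono) auto
    also have "\<dots> \<le> psi e / (e^m)^2"
    proof (rule divide_left_mono)
      show "(e^m)^2 \<le> nr^2" using nr em by (intro power_mono) auto
      show "0 \<le> psi e" using psipos[OF e(1)] by simp
      show "0 < nr^2 * (e^m)^2" using mult_pos_pos[OF zero_less_power[OF nrp, of 2] zero_less_power[OF em, of 2]] .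
    qed
    finally show ?thesis using b1 n2 by simp
  qed
  have sEM: "s \<in> EM_sm"
  proof -
    have "\<forall>e. 0 < e \<and> e \<le> e0 \<longrightarrow> norm (s e) \<le> 1 * (1 / e) ^ m" using pt by auto
    then show ?thesis using e0 sm_smooth_net[OF ss] unfolding EM_sm_def by blast
  qed
  have "(\<lambda>e. r e * s e - 1) \<in> N_sm"
    unfolding N_sm_def
  proof (intro CollectI conjI allI)
    have "(\<lambda>t. r t * s t + (- 1)) = (\<lambda>e. r e * s e - 1)" by simp
    then show "smooth_net (\<lambda>e. r e * s e - 1)" using rss sm_smooth_net by metis
  next
    fix M :: nat
    define k where "k = M + 2*m"
    define K where "K = (real k + 1)^(k+1)"
    define e1 where "e1 = min e0 1"
    have K: "K \<ge> 0" by (simp add: K_def)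
    show "\<exists>C e0. e0 > 0 \<and> (\<forall>e. 0 < e \<and> e \<le> e0 \<longrightarrow> norm (r e * s e - 1) \<le> C * e ^ M)"
    proof -
      have e1p: "e1 > 0" using e0 by (simp add: e1_def)
      have "norm (r e * s e - 1) \<le> K * e ^ M" if e: "0 < e \<and> e \<le> e1" for e
      proof -
      from e have e': "0 < e" "e \<le> e0" "e \<le> 1" by (auto simp: e1_def)
      have em: "(e^m)^2 > 0" using e' by simp
      have "norm (r e * s e - 1) \<le> psi e / (e^m)^2" using pt[OF e'(1,2)] by simp
      also have "\<dots> \<le> K * e^(k+1) / (e^m)^2"
        using exp_bound[OF e'(1), of k] em e'(1) by (intro divide_right_mono) (auto simp: psi_def Ep1_pos K_def)
      also have "\<dots> = K * e^(M+1)"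
      proof -
        have "e^(k+1) = e^(M+1) * (e^m)^2"
          unfolding k_def power_mult[symmetric] by (simp add: power_add algebra_simps)
        then show ?thesis using e'(1) by simp
      qed
      also have "\<dots> \<le> K * e^M"
        using e' K by (intro mult_left_mono) (auto intro: power_decreasing)
      finally show "norm (r e * s e - 1) \<le> K * e ^ M" .
      qed
      then show ?thesis using e1p by blast
    qed
  qed
  then show ?thesis using sEM unfolding invertible_sm_def by blast
qed




lemma prod_bound:
  fixes a b :: "'a::real_normed_field" and e :: real
  assumes e: "e > 0" and a: "norm a \<le> C1 * (1/e)^N" and b: "norm b \<le> C2 * e^(M+N)"
  shows "norm (a * b) \<le> (C1 * C2) * e^M"
proof -
  have "norm (a * b) = norm a * norm b" by (simp add: norm_mult)
  also have "\<dots> \<le> (C1 * (1/e)^N) * (C2 * e^(M+N))"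
    using a b by (intro mult_mono) (auto intro: order_trans[OF norm_ge_zero])
  also have "\<dots> = (C1 * C2) * e^M"
    using e by (simp add: power_add power_divide field_simps)
  finally show ?thesis .
qed

lemma not_inv_and_zd:
  fixes r :: "real \<Rightarrow> 'a::real_normed_field"
  assumes inv: "invertible_sm r" and zd: "zero_divisor_sm r"
  shows False
proof -
  obtain s' where s': "s' \<in> EM_sm" and n: "(\<lambda>e. r e * s' e - 1) \<in> N_sm"
    using inv unfolding invertible_sm_def by blast
  obtain s where s: "s \<in> EM_sm" "s \<notin> N_sm" and rs: "(\<lambda>e. r e * s e) \<in> N_sm"
    using zd unfolding zero_divisor_sm_def by blast
  obtain N1 C1 a1 where A1: "a1 > 0" "\<And>e. 0 < e \<Longrightarrow> e \<le> a1 \<Longrightarrow> norm (s e) \<le> C1 * (1/e)^N1"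
    using s(1) unfolding EM_sm_def by blast
  obtain N3 C3 a3 where A3: "a3 > 0" "\<And>e. 0 < e \<Longrightarrow> e \<le> a3 \<Longrightarrow> norm (s' e) \<le> C3 * (1/e)^N3"
    using s' unfolding EM_sm_def by blast
  have "s \<in> N_sm"
    unfolding N_sm_def
  proof (intro CollectI conjI allI)
    show "smooth_net s" using s(1) by (simp add: EM_sm_def)
  next
    fix M :: nat
    obtain C2 a2 where A2: "a2 > 0" "\<And>e. 0 < e \<Longrightarrow> e \<le> a2 \<Longrightarrow> norm (r e * s' e - 1) \<le> C2 * e^(M+N1)"
      using n unfolding N_sm_def by blast
    obtain C4 a4 where A4: "a4 > 0" "\<And>e. 0 < e \<Longrightarrow> e \<le> a4 \<Longrightarrow> norm (r e * s e) \<le> C4 * e^(M+N3)"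
      using rs unfolding N_sm_def by blast
    show "\<exists>C e0. e0 > 0 \<and> (\<forall>e. 0 < e \<and> e \<le> e0 \<longrightarrow> norm (s e) \<le> C * e ^ M)"
    proof -
      have pos: "min (min a1 a2) (min a3 a4) > 0" using A1 A2 A3 A4 by simp
      have "norm (s e) \<le> (C1 * C2 + C3 * C4) * e ^ M" if e: "0 < e \<and> e \<le> min (min a1 a2) (min a3 a4)" for e
      proof -
      have eq: "s e = s' e * (r e * s e) - s e * (r e * s' e - 1)"
        by (simp add: algebra_simps)
      have b1: "norm (s e * (r e * s' e - 1)) \<le> (C1 * C2) * e^M"
        using e A1(2)[of e] A2(2)[of e] by (intro prod_bound) auto
      have b2: "norm (s' e * (r e * s e)) \<le> (C3 * C4) * e^M"
        using e A3(2)[of e] A4(2)[of e] by (intro prod_bound) auto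
      have "norm (s e) \<le> norm (s' e * (r e * s e)) + norm (s e * (r e * s' e - 1))"
        by (subst eq) (rule norm_triangle_ineq4)
      also have "\<dots> \<le> (C1 * C2 + C3 * C4) * e^M" using b1 b2 by (simp add: algebra_simps)
      finally show "norm (s e) \<le> (C1 * C2 + C3 * C4) * e ^ M" .
      qed
      then show ?thesis using pos by blast
    qed
  qed
  then show False using s(2) by simp
qed




definition Pw :: "(real \<Rightarrow> 'a::real_normed_field) \<Rightarrow> nat \<Rightarrow> real \<Rightarrow> real \<times> real \<Rightarrow> bool" where
  "Pw r k b ew \<longleftrightarrow> 0 < snd ew \<and> 0 < fst ew - snd ew \<and> fst ew + snd ew < b \<and>
     (\<forall>t. \<bar>t - fst ew\<bar> < snd ew \<longrightarrow> norm (r t) < t ^ k)"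

lemma pick_ex:
  fixes r :: "real \<Rightarrow> 'a::real_normed_field"
  assumes r: "r \<in> EM_sm" and small: "\<And>m e0. e0 > 0 \<Longrightarrow> \<exists>e. 0 < e \<and> e \<le> e0 \<and> norm (r e) < e ^ m"
    and b: "b > 0"
  shows "\<exists>ew. Pw r k b ew"
proof -
  obtain e where e: "0 < e" "e \<le> min (b/2) (1/2)" "norm (r e) < e ^ k"
    using small[of "min (b/2) (1/2)" k] b by auto
  have eI: "e \<in> Iset" using e by (simp add: Iset_def)
  have "sm Iset r" using r by (auto simp: EM_sm_def intro: smooth_net_sm)
  then have "continuous (at e within Iset) r"
    using sm_hasd[OF _ eI] by (blast intro: has_vector_derivative_continuous)
  then have c: "continuous (at e within Iset) (\<lambda>t. norm (r t) - t ^ k)"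
    by (intro continuous_intros)
  obtain d where d: "d > 0" "\<And>t. t \<in> Iset \<Longrightarrow> dist t e < d \<Longrightarrow> dist (norm (r t) - t ^ k) (norm (r e) - e ^ k) < e ^ k - norm (r e)"
    using c[unfolded continuous_within_eps_delta, rule_format, of "e ^ k - norm (r e)"] e(3) by auto
  define w where "w = min d (e/2)"
  have "Pw r k b (e, w)"
    unfolding Pw_def fst_conv snd_conv
  proof (intro conjI allI impI)
    show "0 < w" "0 < e - w" using d e by (auto simp: w_def)
    show "e + w < b" using e b by (auto simp: w_def)
  next
    fix t assume t: "\<bar>t - e\<bar> < w"
    have t1: "\<bar>t - e\<bar> < e/2" using t by (simp add: w_def)
    then have "t \<in> Iset" using e unfolding Iset_def abs_less_iff by auto
    moreover have "dist t e < d" using t by (auto simp: w_def dist_real_def)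
    ultimately have "dist (norm (r t) - t ^ k) (norm (r e) - e ^ k) < e ^ k - norm (r e)"
      by (rule d(2))
    then show "norm (r t) < t ^ k" by (auto simp: dist_real_def)
  qed
  then show ?thesis by blast
qed

lemma Cn_sum:
  fixes f :: "nat \<Rightarrow> real \<Rightarrow> 'a::real_normed_vector"
  shows "nb S \<Longrightarrow> (\<And>k. k < M \<Longrightarrow> Cn S n (f k)) \<Longrightarrow> Cn S n (\<lambda>t. \<Sum>k<M. f k t)"
  by (induction M) (auto intro!: Cn_add Cn_const)

lemma sm_affine: "nb S \<Longrightarrow> sm S (\<lambda>t::real. a * t + b)"
  unfolding sm_def by (intro allI Cn_add Cn_mult Cn_const Cn_id)

lemma zd_construct:
  fixes r :: "real \<Rightarrow> 'a::real_normed_field"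
  assumes r: "r \<in> EM_sm" and small: "\<And>m e0. e0 > 0 \<Longrightarrow> \<exists>e. 0 < e \<and> e \<le> e0 \<and> norm (r e) < e ^ m"
  shows "zero_divisor_sm r"
proof -
  define pick where "pick k b = (SOME ew. Pw r k b ew)" for k b
  have pick: "b > 0 \<Longrightarrow> Pw r k b (pick k b)" for k b
    unfolding pick_def using pick_ex[OF r small] by (rule someI_ex) 
  define sq where "sq = rec_nat (pick 0 1) (\<lambda>k p. pick (Suc k) (min (fst p - snd p) (1 / (real k + 2))))"
  define e where "e k = fst (sq k)" for k
  define w where "w k = snd (sq k)" for k
  define bd where "bd k = (case k of 0 \<Rightarrow> 1 | Suc j \<Rightarrow> min (e j - w j) (1 / (real j + 2)))" for k
  have sqk: "sq k = pick k (bd k)" for k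
    by (cases k) (auto simp: sq_def bd_def e_def w_def)
  have P: "bd k > 0 \<and> bd k \<le> 1 / (real k + 1) \<and> Pw r k (bd k) (e k, w k)" for k
  proof (induction k)
    case 0
    then show ?case using pick[of 1 0] sqk[of 0] by (simp add: bd_def e_def w_def)
  next
    case (Suc k)
    have "bd (Suc k) > 0" using Suc by (auto simp: bd_def Pw_def)
    moreover have "bd (Suc k) \<le> 1 / (real (Suc k) + 1)" by (auto simp: bd_def add.commute)
    ultimately show ?case using pick[of "bd (Suc k)" "Suc k"] sqk[of "Suc k"] by (simp add: e_def w_def)
  qed
  have w0: "0 < w k" and ew0: "0 < e k - w k" and ewb: "e k + w k < 1 / (real k + 1)"
    and rsm: "\<And>t. \<bar>t - e k\<bar> < w k \<Longrightarrow> norm (r t) < t ^ k" for k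
    using P[of k] by (auto simp: Pw_def)
  have step: "e (Suc k) + w (Suc k) \<le> e k - w k" for k
    using P[of "Suc k"] by (auto simp: Pw_def bd_def)
  have dec: "j < k \<Longrightarrow> e k + w k \<le> e j - w j" for j k
  proof (induction k)
    case 0 then show ?case by simp
  next
    case (Suc k)
    show ?case
    proof (cases "j = k")
      case True then show ?thesis using step by simp
    next
      case False
      then have "e k + w k \<le> e j - w j" using Suc by simp
      then show ?thesis using step[of k] w0[of k] by linarith
    qed
  qed
  define J where "J k = {t. \<bar>t - e k\<bar> < w k}" for k
  have disj: "t \<in> J j \<Longrightarrow> t \<in> J k \<Longrightarrow> j = k" for t j k
  proof (rule ccontr)
    assume a: "t \<in> J j" "t \<in> J k" "j \<noteq> k"
    { fix j k assume "t \<in> J j" "t \<in> J k" "j < k"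
      then have False using dec[of j k] by (auto simp: J_def) }
    then show False using a by (metis linorder_neqE_nat)
  qed
  define trm where "trm k t = Bump ((t - e k) / w k)" for k t
  have trm0: "t \<notin> J k \<Longrightarrow> trm k t = 0" for k t
    using w0[of k] by (auto simp: J_def trm_def intro!: Bump_zero simp: abs_divide field_simps)
  define s0 where "s0 t = suminf (\<lambda>k. trm k t)" for t
  have s0J: "t \<in> J k \<Longrightarrow> s0 t = trm k t" for t k
  proof -
    assume t: "t \<in> J k"
    have "s0 t = sum (\<lambda>k. trm k t) {k}"
      unfolding s0_def by (rule suminf_finite) (use t disj trm0 in blast)+
    then show ?thesis by simp
  qed
  have s0N: "(\<And>k. t \<notin> J k) \<Longrightarrow> s0 t = 0" for t
    unfolding s0_def using trm0 by simp
  have s0b: "\<bar>s0 t\<bar> \<le> 1" for t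
    using s0J s0N Bump_bounds by (cases "\<exists>k. t \<in> J k") (auto simp: trm_def)
  have s0e: "s0 (e k) = exp (-2)" for k
    using s0J[of "e k" k] w0[of k] by (simp add: J_def trm_def Bump_0)
  have tsm: "sm Iset (trm k)" for k
  proof -
    have "sm Iset (\<lambda>t. Bump ((1 / w k) * t + (- e k / w k)))"
      by (rule sm_comp[OF nb_Iset Bump_sm sm_affine[OF nb_Iset]])
    moreover have "(\<lambda>t. Bump ((1 / w k) * t + (- e k / w k))) = trm k"
      using w0[of k] by (auto simp: trm_def field_simps)
    ultimately show ?thesis by simp
  qed
  have s0sm: "sm Iset s0"
    unfolding sm_def
  proof
    fix n
    show "Cn Iset n s0"
    proof (rule Cn_local[OF nb_Iset])
      fix t0 assume t0: "t0 \<in> Iset"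
      then have t0p: "t0 / 2 > 0" by (simp add: Iset_def)
      obtain M where M: "inverse (real (Suc M)) < t0 / 2" using reals_Archimedean[OF t0p] by blast
      have eq: "s0 x = (\<Sum>k<M. trm k x)" if x: "x \<in> Iset \<inter> {t0/2<..}" for x
        unfolding s0_def
      proof (rule suminf_finite)
        fix k assume "k \<notin> {..<M}"
        then have "1 / (real k + 1) \<le> inverse (real (Suc M))" by (auto simp: field_simps)
        then have "x \<notin> J k" using x M ewb[of k] by (auto simp: J_def)
        then show "trm k x = 0" by (rule trm0)
      qed simp
      show "\<exists>V g. open V \<and> t0 \<in> V \<and> Cn Iset n g \<and> (\<forall>x\<in>Iset \<inter> V. s0 x = g x)"
        using t0p eq tsm
        by (intro exI[of _ "{t0/2<..}"] exI[of _ "\<lambda>x. \<Sum>k<M. trm k x"])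
           (auto intro!: Cn_sum nb_Iset simp: sm_def)
    qed
  qed
  define s :: "real \<Rightarrow> 'a" where "s t = of_real (s0 t)" for t
  have ssm: "sm Iset s"
    using s0sm unfolding s_def[abs_def] sm_def by (auto intro: Cn_lin nb_Iset bounded_linear_of_real)
  have sEM: "s \<in> EM_sm"
    unfolding EM_sm_def using ssm s0b
    by (auto intro!: sm_smooth_net exI[of _ 0] exI[of _ 1] simp: s_def)
       (metis s0b order_trans le_divide_eq_1_pos)
  have sN: "s \<notin> N_sm"
  proof
    assume "s \<in> N_sm"
    then obtain C a where a: "a > 0" "\<And>x. 0 < x \<Longrightarrow> x \<le> a \<Longrightarrow> norm (s x) \<le> C * x ^ 1"
      unfolding N_sm_def by blast
    have pos: "min a (exp (-2) / (\<bar>C\<bar> + 1)) > 0" using a by simp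
    obtain k where k: "inverse (real (Suc k)) < min a (exp (-2) / (\<bar>C\<bar> + 1))"
      using reals_Archimedean[OF pos] by blast
    have ek1: "e k < 1 / (real k + 1)" using ewb[of k] w0[of k] by linarith
    have ek: "0 < e k" "e k < inverse (real (Suc k))"
      using ew0[of k] w0[of k] ek1 by (auto simp: inverse_eq_divide add.commute)
    have "exp (-2) = norm (s (e k))" by (simp add: s_def s0e)
    also have "\<dots> \<le> C * e k" using a(2)[of "e k"] ek k by simp
    also have "\<dots> \<le> \<bar>C\<bar> * e k" using ek by (intro mult_right_mono) auto
    also have "\<dots> \<le> \<bar>C\<bar> * (exp (-2) / (\<bar>C\<bar> + 1))"
      using ek k by (intro mult_left_mono) auto
    also have "\<dots> < exp (-2)"
      by (simp add: field_simps)
    finally show False by simp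
  qed
  have rsN: "(\<lambda>x. r x * s x) \<in> N_sm"
    unfolding N_sm_def
  proof (intro CollectI conjI allI)
    have "sm Iset r" using r by (auto simp: EM_sm_def intro: smooth_net_sm)
    then show "smooth_net (\<lambda>x. r x * s x)"
      using ssm by (intro sm_smooth_net) (auto simp: sm_def intro!: Cn_mult nb_Iset)
  next
    fix m :: nat
    have pos: "e m + w m > 0" using ew0[of m] w0[of m] by simp
    have "norm (r x * s x) \<le> 1 * x ^ m" if x: "0 < x" "x \<le> e m + w m" for x
    proof (cases "\<exists>k. x \<in> J k")
      case True
      then obtain k where k: "x \<in> J k" by blast
      have km: "m \<le> k"
      proof (rule ccontr)
        assume "\<not> m \<le> k"
        then have "e m + w m \<le> e k - w k" using dec by simp
        then show False using k x by (auto simp: J_def)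
      qed
      have "1 / (real m + 1) \<le> 1" by (simp add: field_simps)
      then have x1: "x \<le> 1" using x ewb[of m] by linarith
      have "norm (r x * s x) = norm (r x) * \<bar>trm k x\<bar>"
        by (simp add: s_def s0J[OF k] norm_mult)
      also have "\<dots> \<le> norm (r x)"
        using Bump_bounds[of "(x - e k) / w k"] by (intro mult_left_le) (auto simp: trm_def)
      also have "\<dots> \<le> x ^ k" using rsm[of x k] k by (auto simp: J_def)
      also have "\<dots> \<le> x ^ m" using x x1 km by (intro power_decreasing) auto
      finally show ?thesis by simp
    next
      case False
      then show ?thesis using x by (simp add: s_def s0N)
    qed
    then show "\<exists>C e0. e0 > 0 \<and> (\<forall>x. 0 < x \<and> x \<le> e0 \<longrightarrow> norm (r x * s x) \<le> C * x ^ m)"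
      using pos by blast
  qed
  show ?thesis unfolding zero_divisor_sm_def using sEM sN rsN by blast
qed


lemma main_generic:
  fixes r :: "real \<Rightarrow> 'a::real_normed_field" and cj :: "'a \<Rightarrow> 'a"
  assumes cjl: "bounded_linear cj" and cjm: "\<And>x. cj x * x = of_real ((norm x)^2)"
    and cjn: "\<And>x. norm (cj x) = norm x" and r: "r \<in> EM_sm"
  shows "\<not> invertible_sm r \<longleftrightarrow> zero_divisor_sm r"
proof
  assume ni: "\<not> invertible_sm r"
  show "zero_divisor_sm r"
  proof (rule zd_construct[OF r])
    fix m :: nat and e0 :: real assume e0: "e0 > 0"
    show "\<exists>e. 0 < e \<and> e \<le> e0 \<and> norm (r e) < e ^ m"
    proof (rule ccontr)
      assume "\<not> (\<exists>e. 0 < e \<and> e \<le> e0 \<and> norm (r e) < e ^ m)"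
      then have "\<And>e. 0 < e \<Longrightarrow> e \<le> e0 \<Longrightarrow> e ^ m \<le> norm (r e)" by (meson not_le)
      then have "invertible_sm r" by (rule invertible_construct[OF cjl cjm cjn r e0])
      then show False using ni by simp
    qed
  qed
next
  assume "zero_divisor_sm r"
  then show "\<not> invertible_sm r" using not_inv_and_zd by blast
qed

theorem proposition4p1:
  shows "(\<forall>r :: real \<Rightarrow> real. r \<in> EM_sm \<longrightarrow> (\<not> invertible_sm r \<longleftrightarrow> zero_divisor_sm r)) \<and>
         (\<forall>r :: real \<Rightarrow> complex. r \<in> EM_sm \<longrightarrow> (\<not> invertible_sm r \<longleftrightarrow> zero_divisor_sm r))"
proof (intro conjI allI impI)
  fix r :: "real \<Rightarrow> real" assume r: "r \<in> EM_sm"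
  show "\<not> invertible_sm r \<longleftrightarrow> zero_divisor_sm r"
    by (rule main_generic[where cj="\<lambda>x. x", OF bounded_linear_ident _ _ r])
       (auto simp: power2_eq_square)
next
  fix r :: "real \<Rightarrow> complex" assume r: "r \<in> EM_sm"
  show "\<not> invertible_sm r \<longleftrightarrow> zero_divisor_sm r"
    by (rule main_generic[where cj=cnj, OF bounded_linear_cnj _ _ r])
       (auto simp del: of_real_power simp: complex_norm_square[symmetric] mult.commute)
qed

end
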